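(* Any set of $5$ points in $\mathbb{R}^2$ that is in convex position is in c.s.c. position.
   Context: A set $S\subset\mathbb{R}^2$ is in convex position if every point of $S$ lies on the boundary of $\mathrm{conv}(S)$. A set of points in $\mathbb{R}^2$ is in c.s.c. position (centrally symmetric convex position) if it is contained in the boundary of a centrally symmetric convex body. *)

theory Defs
  imports "HOL-Analysis.Analysis"
begin

definition convex_position :: "(real^2) set \<Rightarrow> bool" where
  "convex_position S \<longleftrightarrow> S \<subseteq> frontier (convex hull S)"

definition convex_body :: "(real^2) set \<Rightarrow> bool" where
  "convex_body K \<longleftrightarrow> compact K \<and> convex K \<and> interior K \<noteq> {}"

definition centrally_symmetric :: "(real^2) set \<Rightarrow> bool" where
  "centrally_symmetric K \<longleftrightarrow> (\<exists>c. \<forall>x\<in>K. 2 *\<^sub>R c - x \<in> K)"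

definition csc_position :: "(real^2) set \<Rightarrow> bool" where
  "csc_position S \<longleftrightarrow> (\<exists>K. convex_body K \<and> centrally_symmetric K \<and> S \<subseteq> frontier K)"

end

theory Submission
  imports Defs
begin


definition det2 :: "real^2 \<Rightarrow> real^2 \<Rightarrow> real" where
  "det2 x y = x$1*y$2 - x$2*y$1"

definition sc :: "real^2 \<Rightarrow> real^2 \<Rightarrow> real^2 \<Rightarrow> real^2 \<Rightarrow> real" where
  "sc a b c x = det2 (x-a) (c-a) / det2 (b-a) (c-a)"
definition tc :: "real^2 \<Rightarrow> real^2 \<Rightarrow> real^2 \<Rightarrow> real^2 \<Rightarrow> real" where
  "tc a b c x = det2 (b-a) (x-a) / det2 (b-a) (c-a)"

lemma cramer2: "det2 B C *\<^sub>R X = det2 X C *\<^sub>R B + det2 B X *\<^sub>R C"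
  unfolding vec_eq_iff forall_2 det2_def by (simp add: algebra_simps)

lemma recon:
  assumes "det2 (b-a) (c-a) \<noteq> 0"
  shows "x = a + sc a b c x *\<^sub>R (b-a) + tc a b c x *\<^sub>R (c-a)"
proof -
  let ?D = "det2 (b-a) (c-a)"
  have "?D *\<^sub>R (x - a) = ?D *\<^sub>R (sc a b c x *\<^sub>R (b-a) + tc a b c x *\<^sub>R (c-a))"
    using cramer2[of "b-a" "c-a" "x-a"] assms by (simp add: sc_def tc_def scaleR_add_right)
  then have "x - a = sc a b c x *\<^sub>R (b-a) + tc a b c x *\<^sub>R (c-a)"
    using assms by simp
  then show ?thesis by (simp add: algebra_simps)
qed

lemma det2_lin: "det2 (x + y) z = det2 x z + det2 y z" "det2 (u *\<^sub>R x) z = u * det2 x z"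
  "det2 z (x + y) = det2 z x + det2 z y" "det2 z (u *\<^sub>R x) = u * det2 z x" "det2 x x = 0"
  unfolding det2_def by (auto simp: algebra_simps)

lemma sc_lin:
  assumes "det2 (b-a) (c-a) \<noteq> 0"
  shows "sc a b c (a + u *\<^sub>R (b-a) + v *\<^sub>R (c-a)) = u"
    "tc a b c (a + u *\<^sub>R (b-a) + v *\<^sub>R (c-a)) = v"
  using assms unfolding sc_def tc_def by (auto simp: det2_lin)


lemma cont_nth: "continuous_on UNIV (\<lambda>x::real^2. x$i)"
  by (rule linear_continuous_on[OF bounded_linear_vec_nth])

lemma cont_aff: "continuous_on UNIV (\<lambda>x::real^2. k1 * x$1 + k2 * x$2 + k0)"
  by (intro continuous_on_add continuous_on_mult_left cont_nth continuous_on_const)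
lemma cont_sc: "continuous_on UNIV (sc a b c)" "continuous_on UNIV (tc a b c)"
proof -
  let ?D = "det2 (b-a) (c-a)"
  have "sc a b c = (\<lambda>x. ((c-a)$2/?D) * x$1 + (-(c-a)$1/?D) * x$2 + (- a$1 * (c-a)$2 + a$2*(c-a)$1)/?D)"
    by (rule ext) (simp add: sc_def det2_def diff_divide_distrib add_divide_distrib algebra_simps)
  then show "continuous_on UNIV (sc a b c)" by (simp only: cont_aff)
  have "tc a b c = (\<lambda>x. (-(b-a)$2/?D) * x$1 + ((b-a)$1/?D) * x$2 + (- (b-a)$1 * a$2 + (b-a)$2*a$1)/?D)"
    by (rule ext) (simp add: tc_def det2_def diff_divide_distrib add_divide_distrib algebra_simps)
  then show "continuous_on UNIV (tc a b c)" by (simp only: cont_aff)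
qed
lemma aff_help: "u + v = 1 \<Longrightarrow> u *\<^sub>R x + v *\<^sub>R y - a = u *\<^sub>R (x - a) + v *\<^sub>R (y - (a::real^2))"
proof -
  assume "u + v = 1"
  then have "a = u *\<^sub>R a + v *\<^sub>R a" by (metis scaleR_add_left scaleR_one)
  then show ?thesis by (simp add: algebra_simps)
qed
lemma sc_aff: "u + v = 1 \<Longrightarrow> sc a b c (u *\<^sub>R x + v *\<^sub>R y) = u * sc a b c x + v * sc a b c y"
  "u + v = 1 \<Longrightarrow> tc a b c (u *\<^sub>R x + v *\<^sub>R y) = u * tc a b c x + v * tc a b c y"
  unfolding sc_def tc_def by (simp_all add: aff_help det2_lin add_divide_distrib)
lemma sc_shift:
  assumes "det2 (b-a) (c-a) \<noteq> 0"
  shows "sc a b c (x + d *\<^sub>R (b-a)) = sc a b c x + d" "tc a b c (x + d *\<^sub>R (b-a)) = tc a b c x"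
    "sc a b c (x + d *\<^sub>R (c-a)) = sc a b c x" "tc a b c (x + d *\<^sub>R (c-a)) = tc a b c x + d"
proof -
  have e: "x + d *\<^sub>R h - a = (x - a) + d *\<^sub>R h" for h :: "real^2" by simp
  show "sc a b c (x + d *\<^sub>R (b-a)) = sc a b c x + d" "tc a b c (x + d *\<^sub>R (b-a)) = tc a b c x"
    "sc a b c (x + d *\<^sub>R (c-a)) = sc a b c x" "tc a b c (x + d *\<^sub>R (c-a)) = tc a b c x + d"
    using assms unfolding sc_def tc_def e by (auto simp: det2_lin add_divide_distrib)
qed
definition lf :: "real \<Rightarrow> real \<Rightarrow> real^2 \<Rightarrow> real^2 \<Rightarrow> real^2 \<Rightarrow> real^2 \<Rightarrow> real" where
  "lf \<alpha> \<beta> a b c x = \<alpha> * sc a b c x + \<beta> * tc a b c x"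

lemma lf_aff: "u + v = 1 \<Longrightarrow> lf \<alpha> \<beta> a b c (u *\<^sub>R x + v *\<^sub>R y) = u * lf \<alpha> \<beta> a b c x + v * lf \<alpha> \<beta> a b c y"
  unfolding lf_def by (simp add: sc_aff algebra_simps)

lemma lf_shift:
  assumes "det2 (b-a) (c-a) \<noteq> 0"
  shows "lf \<alpha> \<beta> a b c (x + d *\<^sub>R (b-a)) = lf \<alpha> \<beta> a b c x + d * \<alpha>"
    "lf \<alpha> \<beta> a b c (x + d *\<^sub>R (c-a)) = lf \<alpha> \<beta> a b c x + d * \<beta>"
  using sc_shift[OF assms] unfolding lf_def by (auto simp: algebra_simps)
lemma cont_lf: "continuous_on UNIV (lf \<alpha> \<beta> a b c)"
  unfolding lf_def by (intro continuous_on_add continuous_on_mult_left cont_sc)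



lemma cvx_comb_le:
  fixes u v m pp qq :: real
  assumes "0 \<le> u" "0 \<le> v" "u + v = 1" "m \<le> pp" "m \<le> qq"
  shows "m \<le> u * pp + v * qq"
proof -
  have "0 \<le> u*(pp-m)" "0 \<le> v * (qq-m)" using assms by simp_all
  moreover have "u*(pp-m) + v * (qq-m) = u * pp + v * qq - (u+v)*m"
    by (simp add: algebra_simps)
  ultimately show ?thesis using assms(3) by simp
qed

lemma cvx_comb_ge:
  fixes u v m pp qq :: real
  assumes "0 \<le> u" "0 \<le> v" "u + v = 1" "pp \<le> m" "qq \<le> m"
  shows "u * pp + v * qq \<le> m"
  using cvx_comb_le[of u v "-m" "-pp" "-qq"] assms by simp

lemma wrapper:
  fixes S :: "(real^2) set" and a b c :: "real^2"
  assumes D: "det2 (b-a) (c-a) \<noteq> 0"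
    and ind: "\<alpha>*\<beta>' - \<beta>*\<alpha>' \<noteq> 0" and m: "lo < hi" "lob < hib"
    and cov: "\<And>x. x\<in>S \<Longrightarrow> lo \<le> lf \<alpha> \<beta> a b c x \<and> lf \<alpha> \<beta> a b c x \<le> hi \<and>
        lob \<le> lf \<alpha>' \<beta>' a b c x \<and> lf \<alpha>' \<beta>' a b c x \<le> hib \<and>
        (lf \<alpha> \<beta> a b c x = lo \<or> lf \<alpha> \<beta> a b c x = hi \<or> lf \<alpha>' \<beta>' a b c x = lob \<or> lf \<alpha>' \<beta>' a b c x = hib)"
  shows "csc_position S"
proof -
  define F where "F = lf \<alpha> \<beta> a b c"
  define G where "G = lf \<alpha>' \<beta>' a b c"
  define K where "K = {x. lo \<le> F x \<and> F x \<le> hi \<and> lob \<le> G x \<and> G x \<le> hib}"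
  define \<delta> where "\<delta> = \<alpha>*\<beta>' - \<beta>*\<alpha>'"
  have d0: "\<delta> \<noteq> 0" using ind by (simp add: \<delta>_def)
  define Phi where "Phi = (\<lambda>\<sigma> \<tau>. a + \<sigma> *\<^sub>R (b-a) + \<tau> *\<^sub>R (c-a))"
  have FPhi: "F (Phi \<sigma> \<tau>) = \<alpha>*\<sigma> + \<beta>*\<tau>" "G (Phi \<sigma> \<tau>) = \<alpha>'*\<sigma> + \<beta>'*\<tau>" for \<sigma> \<tau>
    using sc_lin[OF D] by (simp_all add: lf_def F_def G_def Phi_def)
  define f0 where "f0 = (lo+hi)/2"
  define g0 where "g0 = (lob+hib)/2"
  define z where "z = Phi ((\<beta>'*f0 - \<beta>*g0)/\<delta>) ((\<alpha>*g0 - \<alpha>'*f0)/\<delta>)"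
  have "\<alpha>*((\<beta>'*f0 - \<beta>*g0)/\<delta>) + \<beta>*((\<alpha>*g0 - \<alpha>'*f0)/\<delta>) = (\<alpha>*(\<beta>'*f0 - \<beta>*g0) + \<beta>*(\<alpha>*g0 - \<alpha>'*f0))/\<delta>"
    by (simp add: add_divide_distrib)
  also have "\<dots> = \<delta>*f0/\<delta>" unfolding \<delta>_def by (simp add: algebra_simps)
  finally have Fz1: "F z = f0" unfolding z_def FPhi using d0 by simp
  have "\<alpha>'*((\<beta>'*f0 - \<beta>*g0)/\<delta>) + \<beta>'*((\<alpha>*g0 - \<alpha>'*f0)/\<delta>) = (\<alpha>'*(\<beta>'*f0 - \<beta>*g0) + \<beta>'*(\<alpha>*g0 - \<alpha>'*f0))/\<delta>"
    by (simp add: add_divide_distrib)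
  also have "\<dots> = \<delta>*g0/\<delta>" unfolding \<delta>_def by (simp add: algebra_simps)
  finally have Fz2: "G z = g0" unfolding z_def FPhi using d0 by simp
  note Fz = Fz1 Fz2
  have cF: "continuous_on UNIV F" "continuous_on UNIV G" unfolding F_def G_def by (rule cont_lf)+
  have closedK: "closed K" unfolding K_def
    by (intro closed_Collect_conj closed_Collect_le cF continuous_on_const)
  define R where "R = \<bar>lo\<bar> + \<bar>hi\<bar> + \<bar>lob\<bar> + \<bar>hib\<bar>"
  have bnd: "norm x \<le> norm a + ((\<bar>\<beta>'\<bar>+\<bar>\<beta>\<bar>)*R/\<bar>\<delta>\<bar>) * norm (b-a) + ((\<bar>\<alpha>\<bar>+\<bar>\<alpha>'\<bar>)*R/\<bar>\<delta>\<bar>) * norm (c-a)"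
    if "x \<in> K" for x
  proof -
    let ?s = "sc a b c x" and ?t = "tc a b c x"
    have FR: "\<bar>F x\<bar> \<le> R" "\<bar>G x\<bar> \<le> R" using that unfolding K_def R_def by auto
    have e1: "\<delta> * ?s = \<beta>' * F x - \<beta> * G x" "\<delta> * ?t = \<alpha> * G x - \<alpha>' * F x"
      unfolding F_def G_def lf_def \<delta>_def by (simp_all add: algebra_simps)
    have "\<bar>\<delta>\<bar> * \<bar>?s\<bar> \<le> (\<bar>\<beta>'\<bar>+\<bar>\<beta>\<bar>)*R"
    proof -
      have "\<bar>\<delta>\<bar> * \<bar>?s\<bar> = \<bar>\<beta>' * F x - \<beta> * G x\<bar>" using e1 by (metis abs_mult)
      also have "\<dots> \<le> \<bar>\<beta>'\<bar> * \<bar>F x\<bar> + \<bar>\<beta>\<bar> * \<bar>G x\<bar>" by (metis abs_mult abs_triangle_ineq4)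
      also have "\<dots> \<le> \<bar>\<beta>'\<bar> * R + \<bar>\<beta>\<bar> * R" using FR by (intro add_mono mult_left_mono) auto
      finally show ?thesis by (simp only: distrib_right)
    qed
    then have s: "\<bar>?s\<bar> \<le> (\<bar>\<beta>'\<bar>+\<bar>\<beta>\<bar>)*R/\<bar>\<delta>\<bar>" using d0 by (simp add: pos_le_divide_eq mult.commute)
    have "\<bar>\<delta>\<bar> * \<bar>?t\<bar> \<le> (\<bar>\<alpha>\<bar>+\<bar>\<alpha>'\<bar>)*R"
    proof -
      have "\<bar>\<delta>\<bar> * \<bar>?t\<bar> = \<bar>\<alpha> * G x - \<alpha>' * F x\<bar>" using e1 by (metis abs_mult)
      also have "\<dots> \<le> \<bar>\<alpha>\<bar> * \<bar>G x\<bar> + \<bar>\<alpha>'\<bar> * \<bar>F x\<bar>" by (metis abs_mult abs_triangle_ineq4)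
      also have "\<dots> \<le> \<bar>\<alpha>\<bar> * R + \<bar>\<alpha>'\<bar> * R" using FR by (intro add_mono mult_left_mono) auto
      finally show ?thesis by (simp only: distrib_right)
    qed
    then have t: "\<bar>?t\<bar> \<le> (\<bar>\<alpha>\<bar>+\<bar>\<alpha>'\<bar>)*R/\<bar>\<delta>\<bar>" using d0 by (simp add: pos_le_divide_eq mult.commute)
    have "norm x = norm (a + ?s *\<^sub>R (b-a) + ?t *\<^sub>R (c-a))" using recon[OF D, of x] by simp
    also have "\<dots> \<le> norm a + \<bar>?s\<bar> * norm (b-a) + \<bar>?t\<bar> * norm (c-a)"
      using norm_triangle_ineq[of "a + ?s *\<^sub>R (b-a)" "?t *\<^sub>R (c-a)"] norm_triangle_ineq[of a "?s *\<^sub>R (b-a)"]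
      by simp
    also have "\<dots> \<le> norm a + ((\<bar>\<beta>'\<bar>+\<bar>\<beta>\<bar>)*R/\<bar>\<delta>\<bar>) * norm (b-a) + ((\<bar>\<alpha>\<bar>+\<bar>\<alpha>'\<bar>)*R/\<bar>\<delta>\<bar>) * norm (c-a)"
      using s t by (intro add_mono mult_right_mono) auto
    finally show ?thesis .
  qed
  have "bounded K" unfolding bounded_iff using bnd by blast
  then have compK: "compact K" using closedK by (simp add: compact_eq_bounded_closed)
  have convK: "convex K" unfolding convex_def
  proof (intro ballI allI impI)
    fix x y and u v :: real
    assume xy: "x \<in> K" "y \<in> K" and uv: "0 \<le> u" "0 \<le> v" "u + v = 1"
    have "F (u *\<^sub>R x + v *\<^sub>R y) = u * F x + v * F y" "G (u *\<^sub>R x + v *\<^sub>R y) = u * G x + v * G y"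
      unfolding F_def G_def using uv by (simp_all add: lf_aff)
    then show "u *\<^sub>R x + v *\<^sub>R y \<in> K" using xy uv unfolding K_def
      by (auto intro!: cvx_comb_le cvx_comb_ge)
  qed
  define U where "U = {x. lo < F x \<and> F x < hi \<and> lob < G x \<and> G x < hib}"
  have "open U" unfolding U_def
    by (intro open_Collect_conj open_Collect_less cF continuous_on_const)
  moreover have "U \<subseteq> K" unfolding U_def K_def by auto
  ultimately have "U \<subseteq> interior K" by (rule interior_maximal[rotated])
  moreover have "z \<in> U" unfolding U_def using Fz m by (simp add: f0_def g0_def)
  ultimately have intK: "interior K \<noteq> {}" by blast
  have symK: "centrally_symmetric K" unfolding centrally_symmetric_def
  proof (intro exI ballI)
    fix x assume x: "x \<in> K"
    have e: "2 *\<^sub>R z - x = 2 *\<^sub>R z + (-1) *\<^sub>R x" by simp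
    have "F (2 *\<^sub>R z + (-1) *\<^sub>R x) = 2 * F z + (-1) * F x"
      unfolding F_def by (rule lf_aff) simp
    moreover have "G (2 *\<^sub>R z + (-1) *\<^sub>R x) = 2 * G z + (-1) * G x"
      unfolding G_def by (rule lf_aff) simp
    ultimately have "F (2 *\<^sub>R z - x) = 2 * F z - F x" "G (2 *\<^sub>R z - x) = 2 * G z - G x"
      by simp_all
    then show "2 *\<^sub>R z - x \<in> K" using x Fz unfolding K_def f0_def g0_def by (auto; linarith)
  qed
  have front: "S \<subseteq> frontier K"
  proof
    fix x assume xS: "x \<in> S"
    have xK: "x \<in> K" using cov[OF xS] unfolding K_def F_def G_def by auto
    have "x \<notin> interior K"
    proof
      assume "x \<in> interior K"
      then obtain e where e: "e > 0" "ball x e \<subseteq> K" using mem_interior by blast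
      have pt: "\<exists>d>0. x + d *\<^sub>R h \<in> K \<and> x + (-d) *\<^sub>R h \<in> K" for h :: "real^2"
      proof -
        define d where "d = e / (2 * (norm h + 1))"
        have "2 * (norm h + 1) > 0" by (smt (verit) norm_ge_zero)
        then have dpos: "d > 0" using e by (simp add: d_def)
        have "d * norm h < e"
        proof -
          have "d * norm h \<le> d * (norm h + 1)" using dpos by simp
          also have "\<dots> = e/2"
          proof -
            have nz: "norm h + 1 \<noteq> 0" by (smt (verit) norm_ge_zero)
            have nz2: "2 * norm h + 2 \<noteq> 0" by (smt (verit) norm_ge_zero)
            show ?thesis unfolding d_def using nz nz2 by (simp add: field_simps)
          qed
          finally show ?thesis using e by simp
        qed
        then have "x + d *\<^sub>R h \<in> ball x e" "x + (-d) *\<^sub>R h \<in> ball x e"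
          using dpos by (simp_all add: dist_norm)
        then show ?thesis using e dpos by blast
      qed
      obtain d1 where d1: "d1 > 0" "x + d1 *\<^sub>R (b-a) \<in> K" "x + (-d1) *\<^sub>R (b-a) \<in> K"
        using pt by blast
      obtain d2 where d2: "d2 > 0" "x + d2 *\<^sub>R (c-a) \<in> K" "x + (-d2) *\<^sub>R (c-a) \<in> K"
        using pt by blast
      have sh: "F (x + d *\<^sub>R (b-a)) = F x + d*\<alpha>" "F (x + d *\<^sub>R (c-a)) = F x + d*\<beta>"
        "G (x + d *\<^sub>R (b-a)) = G x + d*\<alpha>'" "G (x + d *\<^sub>R (c-a)) = G x + d*\<beta>'" for d
        unfolding F_def G_def using lf_shift[OF D] by auto
      note K1 = d1(2,3)[unfolded K_def mem_Collect_eq sh]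
      note K2 = d2(2,3)[unfolded K_def mem_Collect_eq sh]
      have z1: "d1 * p = 0 \<Longrightarrow> p = 0" "d2 * p = 0 \<Longrightarrow> p = 0" for p using d1(1) d2(1) by auto
      have "(d1*\<alpha> = 0 \<and> d2*\<beta> = 0) \<or> (d1*\<alpha>' = 0 \<and> d2*\<beta>' = 0)"
        using cov[OF xS, folded F_def G_def] K1 K2
        by (smt (verit) mult_minus_left)
      then have "(\<alpha> = 0 \<and> \<beta> = 0) \<or> (\<alpha>' = 0 \<and> \<beta>' = 0)"
        using d1(1) d2(1) by auto
      then show False using ind by auto
    qed
    then show "x \<in> frontier K" unfolding frontier_def using xK closure_subset by blast
  qed
  show ?thesis unfolding csc_position_def convex_body_def
    by (intro exI[of _ K] conjI compK convK intK symK front)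
qed



definition cv :: "real \<Rightarrow> real \<Rightarrow> real \<Rightarrow> real \<Rightarrow> real \<Rightarrow> real \<Rightarrow> real \<Rightarrow> real \<Rightarrow> real \<Rightarrow> real \<Rightarrow> bool" where
  "cv al be al' be' m1 M1 m2 M2 ss tt \<longleftrightarrow>
     m1 \<le> al * ss+be * tt \<and> al * ss+be * tt \<le> M1 \<and> m2 \<le> al' * ss+be' * tt \<and> al' * ss+be' * tt \<le> M2 \<and>
     (al * ss+be * tt = m1 \<or> al * ss+be * tt = M1 \<or> al' * ss+be' * tt = m2 \<or> al' * ss+be' * tt = M2)"

definition good :: "real \<Rightarrow> real \<Rightarrow> real \<Rightarrow> real \<Rightarrow> real \<Rightarrow> real \<Rightarrow> real \<Rightarrow> real \<Rightarrow> real \<Rightarrow> real \<Rightarrow> real \<Rightarrow> real \<Rightarrow> bool" where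
  "good p q u w al be al' be' m1 M1 m2 M2 \<longleftrightarrow> al * be' - be * al' \<noteq> 0 \<and> m1 < M1 \<and> m2 < M2 \<and>
     cv al be al' be' m1 M1 m2 M2 0 0 \<and> cv al be al' be' m1 M1 m2 M2 1 0 \<and> cv al be al' be' m1 M1 m2 M2 0 1 \<and>
     cv al be al' be' m1 M1 m2 M2 p q \<and> cv al be al' be' m1 M1 m2 M2 u w"

lemma coreA:
  fixes p q u w :: real
  assumes "p \<le> 1" "q \<le> 1" "1 \<le> p + q" "u \<le> 0" "w \<le> 1" "0 \<le> u + w"
    and "\<not> (p = 0 \<and> q = 1)" "\<not> (u = 0 \<and> w = 1)"
  shows "\<exists>al be al' be' m1 M1 m2 M2. good p q u w al be al' be' m1 M1 m2 M2"
proof (cases "q = 1 \<and> w = 1")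
  case True
  have "good p q u w 0 1 1 0 0 1 (-2) 2"
    using assms True unfolding good_def cv_def by auto
  then show ?thesis by blast
next
  case False
  have p0: "p > 0" using assms by auto
  have w0: "w \<ge> 0" "q \<ge> 0" using assms by auto
  have uw: "u < 1 - w" using assms by auto
  have h1: "(1-q) * u \<le> 0" using assms by (simp add: mult_nonneg_nonpos)
  have h2: "0 \<le> p * (1-w)" using assms p0 by simp
  have ind: "(1-q) * u - p * (1-w) \<noteq> 0"
  proof
    assume "(1-q) * u - p * (1-w) = 0"
    then have "(1-q) * u = 0" "p * (1-w) = 0" using h1 h2 by linarith+
    then show False using p0 False assms by auto
  qed
  have h3: "p * w \<le> p" using assms p0 by (simp add: mult_left_le)
  have h4: "0 \<le> (1-q) * (u+w)" using assms by simp
  have h5: "0 \<le> w * (p+q-1)" using assms w0 by simp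
  have h6: "(1-w) * p \<le> 1-w" using assms by (simp add: mult_left_le)
  have h7: "u * q \<le> 0" using assms w0 by (simp add: mult_nonpos_nonneg)
  have h8: "0 \<le> (1-w) * p" using h2 by (simp add: mult.commute)
  have e1: "(1-q) * p + p * q = p" "(1-w) * u + u * w = u" by (simp_all add: algebra_simps)
  have e3: "(1-q) * u + p * w = (1-q) * (u+w) + w * (p+q-1)" by (simp add: algebra_simps)
  have e4: "(1-w) * p + u * q - u = (1-w) * p + (-u) * (1-q)" by (simp add: algebra_simps)
  have h9: "0 \<le> (-u) * (1-q)" using assms by (simp add: mult_nonpos_nonneg)
  have "good p q u w (1-q) p (1-w) u 0 p u (1-w)"
    unfolding good_def cv_def mult_zero_right mult_1_right add_0_left add_0_right e1
    using assms p0 w0 uw ind h1 h2 h3 h4 h5 h6 h7 h8 h9 e3 e4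
    by (intro conjI; (linarith | simp))
  then show ?thesis by blast
qed

lemma inside_contra:
  fixes p q u w k om1 om2 :: real
  assumes "0 \<le> p" "0 \<le> u" "0 \<le> w" "1 \<le> p+q" "1 \<le> u + w" "q \<le> 1" "u \<le> 1"
    "\<not>(p = 0 \<and> q = 1)" "\<not>(u = 1 \<and> w = 0)"
    "k = q * u - p * w" "0 \<le> k" "k < q - w"
    "0 \<le> om1 * u + om2 * w" "om1 \<le> om1 * u+ om2 * w" "om1 * p + om2 * q \<le> om1 * u + om2 * w" "om2 \<le> om1 * u+ om2 * w"
  shows "om1 = 0 \<and> om2 = 0"
proof -
  define E where "E = om1 * u + om2 * w"
  define Dd where "Dd = om1 * p + om2 * q"
  have eq: "q * E = k * om1 + w * Dd" unfolding E_def Dd_def assms(10) by (simp add: algebra_simps)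
  have i1: "k * om1 \<le> k * E" using assms(11,14) E_def by (simp add: mult_left_mono)
  have i2: "w * Dd \<le> w * E" using assms(3,15) E_def Dd_def by (simp add: mult_left_mono)
  have "(q-k-w) * E \<le> 0" using eq i1 i2 by (simp add: algebra_simps)
  moreover have "q - k - w > 0" using assms by linarith
  ultimately have "E \<le> 0" by (simp add: mult_le_0_iff)
  then have E0: "E = 0" using assms(13) E_def by linarith
  then have o: "om1 \<le> 0" "om2 \<le> 0" using assms(14,16) E_def by auto
  have j1: "k * om1 \<le> 0" using o assms(11) by (simp add: mult_nonneg_nonpos)
  have j2: "w * Dd \<le> 0" using i2 E0 by simp
  have "k * om1 + w * Dd = 0" using eq E0 by simp
  then have wD: "w * Dd = 0" using j1 j2 by linarith
  have l1: "om1 * u \<le> 0" using o assms(2) by (simp add: mult_nonpos_nonneg)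
  have l2: "om2 * w \<le> 0" using o assms(3) by (simp add: mult_nonpos_nonneg)
  have "om1 * u = 0" "om2 * w = 0" using E0 E_def l1 l2 by linarith+
  moreover have "w \<noteq> 0" using assms by auto
  ultimately have o20: "om2 = 0" by simp
  have "Dd = 0" using wD \<open>w \<noteq> 0\<close> by simp
  then have "om1 * p = 0" using o20 Dd_def by simp
  moreover have "p \<noteq> 0" using assms by auto
  ultimately show ?thesis using o20 by simp
qed

lemma coreB_pos:
  fixes p q u w om1 om2 n1 n2 :: real
  assumes r: "p \<le> 1" "q \<le> 1" "u \<le> 1" "w \<le> 1" "1 \<le> p+q" "1 \<le> u+w"
    and dist: "\<not>(p = 0 \<and> q = 1)" "\<not>(p = 1 \<and> q = 0)" "\<not>(u = 0 \<and> w = 1)" "\<not>(u = 1 \<and> w = 0)"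
      "\<not>(p = u \<and> q = w)"
    and k: "0 \<le> q * u - p * w"
    and sE: "om1 \<noteq> 0 \<or> om2 \<noteq> 0" "0 \<le> om1 * u + om2 * w" "om1 \<le> om1 * u+ om2 * w" "om2 \<le> om1 * u + om2 * w"
      "om1 * p + om2 * q \<le> om1 * u+ om2 * w"
    and sD: "n1 \<noteq> 0 \<or> n2 \<noteq> 0" "0 \<le> n1 * p + n2 * q" "n1 \<le> n1 * p+n2 * q" "n2 \<le> n1 * p+n2 * q"
      "n1 * u+n2 * w \<le> n1 * p+n2 * q"
  shows "\<exists>al be al' be' m1 M1 m2 M2. good p q u w al be al' be' m1 M1 m2 M2"
proof -
  define k where "k = q * u - p * w"
  have nn: "0 \<le> p" "0 \<le> q" "0 \<le> u" "0 \<le> w" using r by linarith+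
  have c1: "q - w \<le> k"
  proof (rule ccontr)
    assume "\<not> q - w \<le> k"
    then have "om1 = 0 \<and> om2 = 0"
      using inside_contra[of p u w q k om1 om2] nn r dist k_def k sE by auto
    then show False using sE(1) by simp
  qed
  have c2: "u - p \<le> k"
  proof (rule ccontr)
    assume "\<not> u - p \<le> k"
    then have "n2 = 0 \<and> n1 = 0"
      using inside_contra[of w q p u k n2 n1] nn r dist k_def k sD by (auto simp: algebra_simps)
    then show False using sD(1) by simp
  qed
  define m1 where "m1 = min 0 (min (q-w) (u-p))"
  have fd: "(q-w) * p + (u-p) * q = k" "(q-w) * u + (u-p) * w = k" unfolding k_def by (simp_all add: algebra_simps)
  have mM: "m1 < k"
  proof (rule ccontr)
    assume "\<not> m1 < k"
    then have "m1 = k" using k k_def m1_def by linarith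
    then have "q = w" "u = p" using c1 c2 k k_def m1_def by (smt (verit))+
    then show False using dist by simp
  qed
  have base: "m1 \<le> 0" "m1 \<le> q - w" "m1 \<le> u - p" "0 \<le> k" unfolding m1_def k_def using k by auto
  show ?thesis
  proof (cases "q = w")
    case False
    have "good p q u w (q-w) (u-p) 0 1 m1 k 0 1"
      unfolding good_def cv_def using fd mM base c1 c2 False nn r by (simp add: fd)
    then show ?thesis by blast
  next
    case True
    then have "u \<noteq> p" using dist by auto
    have "good p q u w (q-w) (u-p) 1 0 m1 k 0 1"
      unfolding good_def cv_def using fd mM base c1 c2 True \<open>u \<noteq> p\<close> nn r by auto
    then show ?thesis by blast
  qed
qed

lemma good_swap: "good p q u w al be al' be' m1 M1 m2 M2 = good u w p q al be al' be' m1 M1 m2 M2"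
  unfolding good_def by auto

lemma coreB:
  fixes p q u w om1 om2 n1 n2 :: real
  assumes r: "p \<le> 1" "q \<le> 1" "u \<le> 1" "w \<le> 1" "1 \<le> p+q" "1 \<le> u+w"
    and dist: "\<not>(p = 0 \<and> q = 1)" "\<not>(p = 1 \<and> q = 0)" "\<not>(u = 0 \<and> w = 1)" "\<not>(u = 1 \<and> w = 0)"
      "\<not>(p = u \<and> q = w)"
    and sE: "om1 \<noteq> 0 \<or> om2 \<noteq> 0" "0 \<le> om1 * u + om2 * w" "om1 \<le> om1 * u+ om2 * w" "om2 \<le> om1 * u + om2 * w"
      "om1 * p + om2 * q \<le> om1 * u+ om2 * w"
    and sD: "n1 \<noteq> 0 \<or> n2 \<noteq> 0" "0 \<le> n1 * p + n2 * q" "n1 \<le> n1 * p+n2 * q" "n2 \<le> n1 * p+n2 * q"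
      "n1 * u+n2 * w \<le> n1 * p+n2 * q"
  shows "\<exists>al be al' be' m1 M1 m2 M2. good p q u w al be al' be' m1 M1 m2 M2"
proof (cases "0 \<le> q * u - p * w")
  case True
  then show ?thesis using coreB_pos[OF r dist True sE sD] by blast
next
  case False
  then have k': "0 \<le> w * p - u * q" by (simp add: algebra_simps)
  have "\<not>(u = p \<and> w = q)" using dist by auto
  from coreB_pos[OF r(3,4,1,2,6,5) dist(3,4,1,2) this k' sD sE]
  show ?thesis using good_swap by blast
qed



lemma det2_zero[simp]: "det2 0 x = 0" "det2 x 0 = 0"
  unfolding det2_def by simp_all

lemma frame_vals:
  assumes "det2 (b-a) (c-a) \<noteq> 0"
  shows "sc a b c a = 0" "tc a b c a = 0" "sc a b c b = 1" "tc a b c b = 0" "sc a b c c = 0" "tc a b c c = 1"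
  using assms unfolding sc_def tc_def by (simp_all add: det2_lin)

lemma coords_eq:
  assumes "det2 (b-a) (c-a) \<noteq> 0" "sc a b c x = sc a b c y" "tc a b c x = tc a b c y"
  shows "x = y"
  using recon[OF assms(1), of x] recon[OF assms(1), of y] assms(2,3) by metis

lemma det2_cyc: "det2 (c-b) (a-b) = det2 (b-a) (c-(a::real^2))"
  "det2 (x-b) (a-b) = det2 (b-a) (x-(a::real^2))"
  "det2 (c-b) (x-b) = det2 (b-a) (c-a) - det2 (x-a) (c-a) - det2 (b-a) (x-(a::real^2))"
  "det2 (b-x) (c-x) = det2 (b-a) (c-a) - det2 (x-a) (c-a) - det2 (b-a) (x-(a::real^2))"
  unfolding det2_def by (simp_all add: algebra_simps)

lemma sc_cyc:
  assumes "det2 (b-a) (c-a) \<noteq> 0"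
  shows "sc b c a x = tc a b c x" "tc b c a x = 1 - sc a b c x - tc a b c x"
proof -
  show "sc b c a x = tc a b c x" unfolding sc_def tc_def
    by (simp only: det2_cyc(1)[of c b a] det2_cyc(2)[of x b a])
  show "tc b c a x = 1 - sc a b c x - tc a b c x" unfolding sc_def tc_def
    using assms by (simp only: det2_cyc(1)[of c b a] det2_cyc(3)[of c b x a]) (simp add: diff_divide_distrib)
qed

lemma maxarea_coords:
  assumes D: "det2 (b-a) (c-a) \<noteq> 0" and abc: "a \<in> S" "b \<in> S" "c \<in> S" and x: "x \<in> S"
    and ma: "\<forall>x\<in>S. \<forall>y\<in>S. \<forall>z\<in>S. \<bar>det2 (y-x) (z-x)\<bar> \<le> \<bar>det2 (b-a) (c-a)\<bar>"
  shows "\<bar>sc a b c x\<bar> \<le> 1" "\<bar>tc a b c x\<bar> \<le> 1" "\<bar>1 - sc a b c x - tc a b c x\<bar> \<le> 1"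
proof -
  let ?D = "det2 (b-a) (c-a)"
  have pos: "\<bar>?D\<bar> > 0" using D by simp
  have "\<bar>det2 (x-a) (c-a)\<bar> \<le> \<bar>?D\<bar>" using ma abc x by blast
  then show "\<bar>sc a b c x\<bar> \<le> 1" unfolding sc_def using pos by (simp add: abs_divide divide_le_eq_1)
  have "\<bar>det2 (b-a) (x-a)\<bar> \<le> \<bar>?D\<bar>" using ma abc x by blast
  then show "\<bar>tc a b c x\<bar> \<le> 1" unfolding tc_def using pos by (simp add: abs_divide divide_le_eq_1)
  have "\<bar>det2 (b-x) (c-x)\<bar> \<le> \<bar>?D\<bar>" using ma abc x by blast
  moreover have "1 - sc a b c x - tc a b c x = det2 (b-x) (c-x) / ?D"
    unfolding sc_def tc_def using D by (simp only: det2_cyc(4)[of b x c a]) (simp add: diff_divide_distrib)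
  ultimately show "\<bar>1 - sc a b c x - tc a b c x\<bar> \<le> 1" using pos by (simp add: abs_divide divide_le_eq_1)
qed

lemma supp_coords:
  assumes D: "det2 (b-a) (c-a) \<noteq> 0" and w: "w \<noteq> 0" and sup: "\<forall>y\<in>S. w \<bullet> y \<le> w \<bullet> x"
  shows "\<exists>om1 om2. (om1 \<noteq> 0 \<or> om2 \<noteq> 0) \<and> (\<forall>y\<in>S. om1 * sc a b c y + om2 * tc a b c y \<le> om1 * sc a b c x + om2 * tc a b c x)"
proof (intro exI conjI)
  let ?om1 = "w \<bullet> (b-a)" and ?om2 = "w \<bullet> (c-a)"
  have wy: "w \<bullet> y = w \<bullet> a + ?om1 * sc a b c y + ?om2 * tc a b c y" for y
  proof -
    have "w \<bullet> y = w \<bullet> (a + sc a b c y *\<^sub>R (b-a) + tc a b c y *\<^sub>R (c-a))"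
      using recon[OF D, of y] by simp
    then show ?thesis by (simp add: inner_add_right mult.commute)
  qed
  show "\<forall>y\<in>S. ?om1 * sc a b c y + ?om2 * tc a b c y \<le> ?om1 * sc a b c x + ?om2 * tc a b c x"
  proof
    fix y assume "y \<in> S"
    then have "w \<bullet> y \<le> w \<bullet> x" using sup by blast
    then show "?om1 * sc a b c y + ?om2 * tc a b c y \<le> ?om1 * sc a b c x + ?om2 * tc a b c x"
      using wy[of y] wy[of x] by linarith
  qed
  show "?om1 \<noteq> 0 \<or> ?om2 \<noteq> 0"
  proof (rule ccontr)
    assume "\<not> (?om1 \<noteq> 0 \<or> ?om2 \<noteq> 0)"
    then have z: "?om1 = 0" "?om2 = 0" by auto
    have "det2 (b-a) (c-a) * (w \<bullet> w) = w \<bullet> (det2 (b-a) (c-a) *\<^sub>R w)" by (simp only: inner_scaleR_right)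
    also have "\<dots> = 0" unfolding cramer2[of "b-a" "c-a" w] using z by (simp only: inner_add_right inner_scaleR_right mult_zero_right add_0)
    finally have "w \<bullet> w = 0" using D by simp
    then show False using w by simp
  qed
qed

lemma region_real:
  fixes s1 t1 om1 om2 :: real
  assumes "om1 \<noteq> 0 \<or> om2 \<noteq> 0" "0 \<le> om1* s1 + om2* t1" "om1 \<le> om1* s1 + om2* t1" "om2 \<le> om1* s1 + om2* t1"
  shows "s1 \<le> 0 \<or> t1 \<le> 0 \<or> 1 - s1 - t1 \<le> 0"
proof (rule ccontr)
  assume "\<not> ?thesis"
  then have st: "s1 > 0" "t1 > 0" "1 - s1 - t1 > 0" by auto
  define E where "E = om1* s1 + om2* t1"
  have "s1* om1 \<le> s1* E" "t1* om2 \<le> t1* E" using st assms E_def by (simp_all add: mult_left_mono)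
  then have "E \<le> (s1+t1)* E" using E_def by (simp add: algebra_simps)
  then have "(1-s1-t1)* E \<le> 0" by (simp add: algebra_simps)
  then have "E \<le> 0" using st by (simp add: mult_le_0_iff)
  then have E0: "E = 0" using assms E_def by linarith
  then have o: "om1 \<le> 0" "om2 \<le> 0" using assms E_def by auto
  have "om1* s1 \<le> 0" "om2* t1 \<le> 0" using o st by (simp_all add: mult_nonpos_nonneg)
  then have "om1* s1 = 0" "om2* t1 = 0" using E0 E_def by linarith+
  then have "om1 = 0" "om2 = 0" using st by auto
  then show False using assms by simp
qed



lemma wrapper2:
  assumes D: "det2 (b-a) (c-a) \<noteq> 0" and S: "S = {a,b,c,d,e}"
    and g: "good (sc a b c d) (tc a b c d) (sc a b c e) (tc a b c e) al be al' be' m1 M1 m2 M2"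
  shows "csc_position S"
proof (rule wrapper[OF D])
  show "al * be' - be * al' \<noteq> 0" "m1 < M1" "m2 < M2" using g unfolding good_def by auto
  have cvx: "cv al be al' be' m1 M1 m2 M2 (sc a b c x) (tc a b c x)" if "x \<in> S" for x
    using that g frame_vals[OF D] unfolding S good_def by auto
  fix x assume "x \<in> S"
  from cvx[OF this]
  show "m1 \<le> lf al be a b c x \<and> lf al be a b c x \<le> M1 \<and>
        m2 \<le> lf al' be' a b c x \<and> lf al' be' a b c x \<le> M2 \<and>
        (lf al be a b c x = m1 \<or> lf al be a b c x = M1 \<or> lf al' be' a b c x = m2 \<or> lf al' be' a b c x = M2)"
    unfolding cv_def lf_def .
qed

lemma GA:
  assumes D: "det2 (b-a) (c-a) \<noteq> 0" and S: "S = {a,b,c,d,e}"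
    and ne: "d \<noteq> c" "e \<noteq> c"
    and ma: "\<forall>x\<in>S. \<forall>y\<in>S. \<forall>z\<in>S. \<bar>det2 (y-x) (z-x)\<bar> \<le> \<bar>det2 (b-a) (c-a)\<bar>"
    and rd: "1 - sc a b c d - tc a b c d \<le> 0" and re: "sc a b c e \<le> 0"
  shows "csc_position S"
proof -
  have mem: "a \<in> S" "b \<in> S" "c \<in> S" "d \<in> S" "e \<in> S" using S by auto
  note md = maxarea_coords[OF D mem(1,2,3) mem(4) ma]
  note me = maxarea_coords[OF D mem(1,2,3) mem(5) ma]
  have cd: "\<not> (sc a b c d = 0 \<and> tc a b c d = 1)"
    using coords_eq[OF D, of d c] frame_vals[OF D] ne by auto
  have ce: "\<not> (sc a b c e = 0 \<and> tc a b c e = 1)"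
    using coords_eq[OF D, of e c] frame_vals[OF D] ne by auto
  obtain al be al' be' m1 M1 m2 M2 where
    "good (sc a b c d) (tc a b c d) (sc a b c e) (tc a b c e) al be al' be' m1 M1 m2 M2"
    using coreA[of "sc a b c d" "tc a b c d" "sc a b c e" "tc a b c e"] md me rd re cd ce
    by (auto simp: abs_le_iff)
  then show ?thesis using wrapper2[OF D S] by blast
qed

lemma GB:
  assumes D: "det2 (b-a) (c-a) \<noteq> 0" and S: "S = {a,b,c,d,e}"
    and ne: "d \<noteq> c" "e \<noteq> c" "d \<noteq> b" "e \<noteq> b" "d \<noteq> e"
    and ma: "\<forall>x\<in>S. \<forall>y\<in>S. \<forall>z\<in>S. \<bar>det2 (y-x) (z-x)\<bar> \<le> \<bar>det2 (b-a) (c-a)\<bar>"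
    and rd: "1 - sc a b c d - tc a b c d \<le> 0" and re: "1 - sc a b c e - tc a b c e \<le> 0"
    and wd: "wd \<noteq> 0" "\<forall>y\<in>S. wd \<bullet> y \<le> wd \<bullet> d"
    and we: "we \<noteq> 0" "\<forall>y\<in>S. we \<bullet> y \<le> we \<bullet> e"
  shows "csc_position S"
proof -
  have mem: "a \<in> S" "b \<in> S" "c \<in> S" "d \<in> S" "e \<in> S" using S by auto
  note md = maxarea_coords[OF D mem(1,2,3) mem(4) ma]
  note me = maxarea_coords[OF D mem(1,2,3) mem(5) ma]
  note fv = frame_vals[OF D]
  have cd: "\<not> (sc a b c d = 0 \<and> tc a b c d = 1)" "\<not> (sc a b c d = 1 \<and> tc a b c d = 0)"
    using coords_eq[OF D, of d c] coords_eq[OF D, of d b] fv ne by auto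
  have ce: "\<not> (sc a b c e = 0 \<and> tc a b c e = 1)" "\<not> (sc a b c e = 1 \<and> tc a b c e = 0)"
    using coords_eq[OF D, of e c] coords_eq[OF D, of e b] fv ne by auto
  have cde: "\<not> (sc a b c d = sc a b c e \<and> tc a b c d = tc a b c e)"
    using coords_eq[OF D, of d e] ne by auto
  obtain om1 om2 where o: "om1 \<noteq> 0 \<or> om2 \<noteq> 0"
    "\<forall>y\<in>S. om1 * sc a b c y + om2 * tc a b c y \<le> om1 * sc a b c e + om2 * tc a b c e"
    using supp_coords[OF D we] by blast
  obtain n1 n2 where n: "n1 \<noteq> 0 \<or> n2 \<noteq> 0"
    "\<forall>y\<in>S. n1 * sc a b c y + n2 * tc a b c y \<le> n1 * sc a b c d + n2 * tc a b c d"
    using supp_coords[OF D wd] by blast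
  have o': "0 \<le> om1 * sc a b c e + om2 * tc a b c e" "om1 \<le> om1 * sc a b c e + om2 * tc a b c e"
    "om2 \<le> om1 * sc a b c e + om2 * tc a b c e"
    "om1 * sc a b c d + om2 * tc a b c d \<le> om1 * sc a b c e + om2 * tc a b c e"
    using o(2)[rule_format, OF mem(1)] o(2)[rule_format, OF mem(2)] o(2)[rule_format, OF mem(3)]
      o(2)[rule_format, OF mem(4)] fv by simp_all
  have n': "0 \<le> n1 * sc a b c d + n2 * tc a b c d" "n1 \<le> n1 * sc a b c d + n2 * tc a b c d"
    "n2 \<le> n1 * sc a b c d + n2 * tc a b c d"
    "n1 * sc a b c e + n2 * tc a b c e \<le> n1 * sc a b c d + n2 * tc a b c d"
    using n(2)[rule_format, OF mem(1)] n(2)[rule_format, OF mem(2)] n(2)[rule_format, OF mem(3)]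
      n(2)[rule_format, OF mem(5)] fv by simp_all
  obtain al be al' be' m1 M1 m2 M2 where
    "good (sc a b c d) (tc a b c d) (sc a b c e) (tc a b c e) al be al' be' m1 M1 m2 M2"
    using coreB[of "sc a b c d" "tc a b c d" "sc a b c e" "tc a b c e" om1 om2 n1 n2] md me rd re cd ce cde
      o(1) o' n(1) n'
    by (auto simp: abs_le_iff)
  then show ?thesis using wrapper2[OF D S] by blast
qed



lemma support_vec:
  fixes S :: "(real^2) set"
  assumes fr: "x \<in> frontier (convex hull S)" and xS: "x \<in> S" and int: "interior (convex hull S) \<noteq> {}"
  shows "\<exists>w. w \<noteq> 0 \<and> (\<forall>y\<in>S. w \<bullet> y \<le> w \<bullet> x)"
proof -
  let ?C = "convex hull S"
  have xi: "x \<notin> interior ?C" using fr by (simp add: frontier_def)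
  let ?T = "(\<lambda>z. z - x) ` interior ?C"
  have "convex ?T" by (simp add: convex_interior)
  moreover have "0 \<notin> ?T" using xi by auto
  ultimately obtain a where a: "a \<noteq> 0" "\<forall>t\<in>?T. 0 \<le> inner a t"
    using separating_hyperplane_set_0 by blast
  have "interior ?C \<subseteq> {z. inner a x \<le> inner a z}"
  proof
    fix z assume "z \<in> interior ?C"
    then have "0 \<le> inner a (z - x)" using a(2) by auto
    then show "z \<in> {z. inner a x \<le> inner a z}" by (simp add: inner_diff_right)
  qed
  then have "closure (interior ?C) \<subseteq> {z. inner a x \<le> inner a z}"
    by (rule closure_minimal) (simp add: closed_halfspace_ge[where a=a and b="inner a x"])
  then have cl: "closure ?C \<subseteq> {z. inner a x \<le> inner a z}"
    unfolding convex_closure_interior[OF convex_convex_hull int] .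
  show ?thesis
  proof (intro exI conjI ballI)
    show "- a \<noteq> 0" using a by simp
    fix y assume "y \<in> S"
    then have "y \<in> ?C" by (rule hull_inc)
    then have "y \<in> closure ?C" using closure_subset by (rule subsetD[rotated])
    then have "inner a x \<le> inner a y" using cl by blast
    then show "- a \<bullet> y \<le> - a \<bullet> x" by simp
  qed
qed

lemma interior_nonempty:
  fixes S :: "(real^2) set"
  assumes D: "det2 (b-a) (c-a) \<noteq> 0" and abc: "a \<in> S" "b \<in> S" "c \<in> S"
  shows "interior (convex hull S) \<noteq> {}"
proof -
  define U where "U = {x. 0 < sc a b c x \<and> 0 < tc a b c x \<and> sc a b c x + tc a b c x < 1}"
  have cs: "continuous_on UNIV (\<lambda>x. sc a b c x + tc a b c x)"
    using cont_sc by (intro continuous_on_add) auto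
  have "open U" unfolding U_def
    by (intro open_Collect_conj open_Collect_less cont_sc continuous_on_const cs)
  moreover have "U \<subseteq> convex hull S"
  proof
    fix x assume "x \<in> U"
    then have "x \<in> convex hull {a,b,c}"
      unfolding convex_hull_3_alt U_def using recon[OF D, of x]
      by (intro CollectI exI[of _ "sc a b c x"] exI[of _ "tc a b c x"]) auto
    moreover have "convex hull {a,b,c} \<subseteq> convex hull S" using abc by (intro hull_mono) auto
    ultimately show "x \<in> convex hull S" by blast
  qed
  ultimately have "U \<subseteq> interior (convex hull S)" by (rule interior_maximal[rotated])
  moreover have "a + (1/3) *\<^sub>R (b-a) + (1/3) *\<^sub>R (c-a) \<in> U"
    unfolding U_def using sc_lin[OF D] by simp
  ultimately show ?thesis by blast
qed




lemma rot_frame: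
  assumes D: "det2 (b-a) (c-a) \<noteq> 0"
  shows "det2 (c-b) (a-b) = det2 (b-a) (c-a)"
    "1 - sc b c a x - tc b c a x = sc a b c x" "sc b c a x = tc a b c x"
    "det2 (a-c) (b-c) = det2 (b-a) (c-a)"
    "1 - sc c a b x - tc c a b x = tc a b c x" "sc c a b x = 1 - sc a b c x - tc a b c x"
proof -
  show d1: "det2 (c-b) (a-b) = det2 (b-a) (c-a)" by (rule det2_cyc(1))
  show "1 - sc b c a x - tc b c a x = sc a b c x" "sc b c a x = tc a b c x"
    using sc_cyc[OF D, of x] by simp_all
  show d2: "det2 (a-c) (b-c) = det2 (b-a) (c-a)" using det2_cyc(1)[where a=b and b=c and c=a] d1 by simp
  have D': "det2 (c-b) (a-b) \<noteq> 0" using d1 D by simp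
  show "1 - sc c a b x - tc c a b x = tc a b c x" "sc c a b x = 1 - sc a b c x - tc a b c x"
    using sc_cyc[OF D', of x] sc_cyc[OF D, of x] by simp_all
qed

lemma collinear_case:
  fixes S :: "(real^2) set"
  assumes fin: "finite S" and ab: "a \<in> S" "b \<in> S" "a \<noteq> b"
    and col: "\<forall>x\<in>S. \<forall>y\<in>S. \<forall>z\<in>S. det2 (y-x) (z-x) = 0"
  shows "csc_position S"
proof -
  define v where "v = b - a"
  define r :: "real^2" where "r = (\<chi> i. if i = 1 then - v$2 else v$1)"
  have r1: "r$1 = - v$2" "r$2 = v$1" unfolding r_def by simp_all
  define c where "c = a + r"
  have v0: "v \<noteq> 0" using ab v_def by simp
  have "v$1 \<noteq> 0 \<or> v$2 \<noteq> 0" using v0 unfolding vec_eq_iff forall_2 by auto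
  then have pos: "v$1 * v$1 + v$2 * v$2 > 0"
    by (metis add_pos_nonneg add_nonneg_pos not_real_square_gt_zero zero_le_square)
  have "det2 (b-a) (c-a) = v$1 * v$1 + v$2 * v$2" unfolding c_def v_def[symmetric] det2_def using r1 by simp
  then have D: "det2 (b-a) (c-a) \<noteq> 0" using pos by linarith
  define R where "R = (\<Sum>x\<in>S. \<bar>sc a b c x\<bar>)"
  show ?thesis
  proof (rule wrapper[OF D, where \<alpha>=0 and \<beta>=1 and \<alpha>'=1 and \<beta>'=0 and lo=0 and hi=1 and lob="-R-1" and hib="R+1"])
    show "0 * 0 - 1 * 1 \<noteq> (0::real)" "(0::real) < 1" by simp_all
    have "R \<ge> 0" unfolding R_def by (simp add: sum_nonneg)
    then show "- R - 1 < R + 1" by simp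
    fix x assume x: "x \<in> S"
    have t0: "tc a b c x = 0" unfolding tc_def using col ab x by simp
    have "\<bar>sc a b c x\<bar> \<le> R" unfolding R_def by (rule member_le_sum[OF x _ fin]) simp
    then show "0 \<le> lf 0 1 a b c x \<and> lf 0 1 a b c x \<le> 1 \<and> - R - 1 \<le> lf 1 0 a b c x \<and> lf 1 0 a b c x \<le> R + 1 \<and>
       (lf 0 1 a b c x = 0 \<or> lf 0 1 a b c x = 1 \<or> lf 1 0 a b c x = - R - 1 \<or> lf 1 0 a b c x = R + 1)"
      unfolding lf_def using t0 by (simp add: abs_le_iff)
  qed
qed

lemma region_geo:
  assumes D: "det2 (b-a) (c-a) \<noteq> 0" and abc: "a \<in> S" "b \<in> S" "c \<in> S"
    and w: "w \<noteq> 0" "\<forall>y\<in>S. w \<bullet> y \<le> w \<bullet> x"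
  shows "1 - sc a b c x - tc a b c x \<le> 0 \<or> sc a b c x \<le> 0 \<or> tc a b c x \<le> 0"
proof -
  obtain om1 om2 where o: "om1 \<noteq> 0 \<or> om2 \<noteq> 0"
    "\<forall>y\<in>S. om1 * sc a b c y + om2 * tc a b c y \<le> om1 * sc a b c x + om2 * tc a b c x"
    using supp_coords[OF D w] by blast
  note fv = frame_vals[OF D]
  have "0 \<le> om1 * sc a b c x + om2 * tc a b c x" "om1 \<le> om1 * sc a b c x + om2 * tc a b c x"
    "om2 \<le> om1 * sc a b c x + om2 * tc a b c x"
    using o(2)[rule_format, OF abc(1)] o(2)[rule_format, OF abc(2)] o(2)[rule_format, OF abc(3)] fv
    by simp_all
  then show ?thesis using region_real[OF o(1)] by auto
qed

theorem mainTheorem3: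
  fixes S :: "(real^2) set"
  assumes "finite S" and "card S = 5" and "convex_position S"
  shows "csc_position S"
proof (cases "\<forall>x\<in>S. \<forall>y\<in>S. \<forall>z\<in>S. det2 (y-x) (z-x) = 0")
  case True
  have "S \<noteq> {}" using assms(2) by auto
  then obtain a where a: "a \<in> S" by blast
  have "card (S - {a}) = 4" using assms(1,2) a by simp
  then have "S - {a} \<noteq> {}" by (metis card.empty zero_neq_numeral)
  then obtain b where b: "b \<in> S" "b \<noteq> a" by blast
  show ?thesis using collinear_case[OF assms(1) a b(1)] b(2) True by auto
next
  case False
  then obtain x0 y0 z0 where xyz0: "x0 \<in> S" "y0 \<in> S" "z0 \<in> S" "det2 (y0-x0) (z0-x0) \<noteq> 0" by blast
  define T where "T = S \<times> S \<times> S"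
  define f where "f = (\<lambda>(x,y,z). \<bar>det2 (y-x) (z-x)\<bar>)"
  have finT: "finite (f ` T)" unfolding T_def using assms(1) by simp
  have neT: "f ` T \<noteq> {}" unfolding T_def using xyz0 by auto
  define M where "M = Max (f ` T)"
  have "M \<in> f ` T" unfolding M_def using finT neT by (rule Max_in)
  then obtain a b c where abc: "a \<in> S" "b \<in> S" "c \<in> S" and fM: "\<bar>det2 (b-a) (c-a)\<bar> = M"
    unfolding T_def f_def by auto
  have ma: "\<forall>x\<in>S. \<forall>y\<in>S. \<forall>z\<in>S. \<bar>det2 (y-x) (z-x)\<bar> \<le> \<bar>det2 (b-a) (c-a)\<bar>"
  proof (intro ballI)
    fix x y z assume "x \<in> S" "y \<in> S" "z \<in> S"
    then have "f (x,y,z) \<in> f ` T" unfolding T_def by auto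
    then have "f (x,y,z) \<le> M" unfolding M_def using finT by simp
    then show "\<bar>det2 (y-x) (z-x)\<bar> \<le> \<bar>det2 (b-a) (c-a)\<bar>" using fM unfolding f_def by simp
  qed
  have D: "det2 (b-a) (c-a) \<noteq> 0"
  proof
    assume "det2 (b-a) (c-a) = 0"
    then have "\<bar>det2 (y0-x0) (z0-x0)\<bar> \<le> 0" using ma xyz0 by fastforce
    then show False using xyz0 by simp
  qed
  have dab: "a \<noteq> b" "a \<noteq> c" "b \<noteq> c" using D by (auto simp: det2_lin)
  have c3: "card {a,b,c} = 3" using dab by simp
  have "card (S - {a,b,c}) = 2" using assms(1,2) abc c3 by (simp add: card_Diff_subset)
  then obtain d e where de: "S - {a,b,c} = {d,e}" "d \<noteq> e" by (auto simp: card_2_iff)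
  have S: "S = {a,b,c,d,e}" using de abc by auto
  have dn: "d \<noteq> a" "d \<noteq> b" "d \<noteq> c" "e \<noteq> a" "e \<noteq> b" "e \<noteq> c" using de by auto
  have dS: "d \<in> S" "e \<in> S" using S by auto
  have fr: "x \<in> frontier (convex hull S)" if "x \<in> S" for x
    using assms(3) that unfolding convex_position_def by blast
  have int: "interior (convex hull S) \<noteq> {}" by (rule interior_nonempty[OF D abc])
  obtain wd where wd: "wd \<noteq> 0" "\<forall>y\<in>S. wd \<bullet> y \<le> wd \<bullet> d"
    using support_vec[OF fr[OF dS(1)] dS(1) int] by blast
  obtain we where we: "we \<noteq> 0" "\<forall>y\<in>S. we \<bullet> y \<le> we \<bullet> e"
    using support_vec[OF fr[OF dS(2)] dS(2) int] by blast
  note rf = rot_frame[OF D]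
  have D1: "det2 (c-b) (a-b) \<noteq> 0" using D rf by simp
  have D2: "det2 (a-c) (b-c) \<noteq> 0" using D rf by simp
  have ma1: "\<forall>x\<in>S. \<forall>y\<in>S. \<forall>z\<in>S. \<bar>det2 (y-x) (z-x)\<bar> \<le> \<bar>det2 (c-b) (a-b)\<bar>" using ma rf by simp
  have ma2: "\<forall>x\<in>S. \<forall>y\<in>S. \<forall>z\<in>S. \<bar>det2 (y-x) (z-x)\<bar> \<le> \<bar>det2 (a-c) (b-c)\<bar>" using ma rf by simp
  have S0': "S = {a,b,c,e,d}" and S1: "S = {b,c,a,d,e}" and S1': "S = {b,c,a,e,d}"
    and S2: "S = {c,a,b,d,e}" and S2': "S = {c,a,b,e,d}" using S by auto
  have rd: "1 - sc a b c d - tc a b c d \<le> 0 \<or> sc a b c d \<le> 0 \<or> tc a b c d \<le> 0"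
    by (rule region_geo[OF D abc wd])
  have re: "1 - sc a b c e - tc a b c e \<le> 0 \<or> sc a b c e \<le> 0 \<or> tc a b c e \<le> 0"
    by (rule region_geo[OF D abc we])
  have rfd: "1 - sc b c a d - tc b c a d = sc a b c d" "sc b c a d = tc a b c d"
    "1 - sc c a b d - tc c a b d = tc a b c d" "sc c a b d = 1 - sc a b c d - tc a b c d"
    using rf by simp_all
  have rfe: "1 - sc b c a e - tc b c a e = sc a b c e" "sc b c a e = tc a b c e"
    "1 - sc c a b e - tc c a b e = tc a b c e" "sc c a b e = 1 - sc a b c e - tc a b c e"
    using rf by simp_all
  from rd show ?thesis
  proof (elim disjE)
    assume A: "1 - sc a b c d - tc a b c d \<le> 0"
    from re show ?thesis
    proof (elim disjE)
      assume "1 - sc a b c e - tc a b c e \<le> 0"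
      then show ?thesis using GB[OF D S dn(3) dn(6) dn(2) dn(5) de(2) ma A _ wd we] by simp
    next
      assume "sc a b c e \<le> 0"
      then show ?thesis using GA[OF D S dn(3) dn(6) ma A] by simp
    next
      assume "tc a b c e \<le> 0"
      then show ?thesis using GA[OF D2 S2' dn(5) dn(2) ma2, of] rfd rfe A by simp
    qed
  next
    assume B: "sc a b c d \<le> 0"
    from re show ?thesis
    proof (elim disjE)
      assume "1 - sc a b c e - tc a b c e \<le> 0"
      then show ?thesis using GA[OF D S0' dn(6) dn(3) ma] B by simp
    next
      assume "sc a b c e \<le> 0"
      then show ?thesis using GB[OF D1 S1 dn(1) dn(4) dn(3) dn(6) de(2) ma1 _ _ wd we] rfd rfe B by simp
    next
      assume "tc a b c e \<le> 0"
      then show ?thesis using GA[OF D1 S1 dn(1) dn(4) ma1] rfd rfe B by simp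
    qed
  next
    assume C: "tc a b c d \<le> 0"
    from re show ?thesis
    proof (elim disjE)
      assume "1 - sc a b c e - tc a b c e \<le> 0"
      then show ?thesis using GA[OF D2 S2 dn(2) dn(5) ma2] rfd rfe C by simp
    next
      assume "sc a b c e \<le> 0"
      then show ?thesis using GA[OF D1 S1' dn(4) dn(1) ma1] rfd rfe C by simp
    next
      assume "tc a b c e \<le> 0"
      then show ?thesis using GB[OF D2 S2 dn(2) dn(5) dn(1) dn(4) de(2) ma2 _ _ wd we] rfd rfe C by simp
    qed
  qed
qed


end
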